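(* Bilocal Classical Theory (BCT) is a digitizable theory. (In fact every nontrivial system of BCT can serve as obit.)
   Context: BCT is an operational probabilistic theory with the following structure. Systems: a trivial system and, for every integer $D>1$, exactly one system of size $D$. For a nontrivial system $\mathrm A$ of size $D_{\mathrm A}$, every state is a nonnegative combination of the $D_{\mathrm A}$ pure states $|i)_{\mathrm A}$, the vertices of the simplex of deterministic states. For nontrivial $\mathrm A,\mathrm B$, the composite $\mathrm{AB}$ has size $2D_{\mathrm A}D_{\mathrm B}$ with pure states $|(ij)_s)_{\mathrm{AB}}$, $s\in\{+,-\}$, $|i)\boxtimes|j)=\tfrac12\sum_s|(ij)_s)$, and $((ij)_{s_1}k)_{s_2}=(i(jk)_{s_1s_2})_{s_1}$. Transformations act linearly, and identity transformations are denoted $\mathcal I$. Channels $\mathcal C\in\mathsf{Tr}_1(\mathrm E\to\mathrm F)$ between nontrivial systems are exactly those for which, for each $j\in\{1,\dots,D_{\mathrm E}\}$, there is a probability distribution $\{\lambda^{(j)}_{m\tau}\}$ over $(m,\tau)\in\{1,\dots,D_{\mathrm F}\}\times\{\pm\}$ with $(\mathcal I_{\mathrm A}\boxtimes\mathcal C)|(ij)_s)_{\mathrm{AE}}=\sum_{m,\tau}\lambda^{(j)}_{m\tau}|(im)_{\tau s})_{\mathrm{AF}}$ for every system $\mathrm A$ (signs multiply as $\pm1$). $\mathrm X^{\boxtimes k}$ denotes the composite of $k$ copies of $\mathrm X$. Two systems $\mathrm A_1,\mathrm A_2$ are asymptotically equivalent if: (1) there are integers $k_1,k_2<\infty$ and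 channels $\mathcal E\in\mathsf{Tr}_1(\mathrm A_1^{\boxtimes k_1}\to\mathrm A_2^{\boxtimes k_2})$, $\mathcal D\in\mathsf{Tr}_1(\mathrm A_2^{\boxtimes k_2}\to\mathrm A_1^{\boxtimes k_1})$ with $\mathcal D\mathcal E=\mathcal I_{\mathrm A_1^{\boxtimes k_1}}$; (2) symmetrically there are $h_1,h_2$ and channels $\mathcal G\in\mathsf{Tr}_1(\mathrm A_2^{\boxtimes h_2}\to\mathrm A_1^{\boxtimes h_1})$, $\mathcal F\in\mathsf{Tr}_1(\mathrm A_1^{\boxtimes h_1}\to\mathrm A_2^{\boxtimes h_2})$ with $\mathcal F\mathcal G=\mathcal I_{\mathrm A_2^{\boxtimes h_2}}$; (3) letting $M_2^{\min}(k_1)$ be the smallest $k_2$ for which (1) holds given $k_1$, and $M_1^{\min}(h_2)$ the smallest $h_1$ for which (2) holds given $h_2$, there is $k$ with $\lim_{k_1\to\infty}M_2^{\min}(k_1)/k_1=k$ and $\lim_{h_2\to\infty}M_1^{\min}(h_2)/h_2=k^{-1}$. A theory is digitizable if there exists a system $\mathrm B$ (an obit) such that for every system $\mathrm X$ there are $k<\infty$ and channels $\mathcal C\in\mathsf{Tr}_1(\mathrm X\to\mathrm B^{\boxtimes k})$, $\mathcal F\in\mathsf{Tr}_1(\mathrm B^{\boxtimes k}\to\mathrm X)$ with $\mathcal F\mathcal C=\mathcal I_{\mathrm X}$, and moreover any two systems with this property are asymptotically equivalent. *)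

theory Defs
  imports Complex_Main
begin

text \<open>Systems of BCT: a nontrivial system is identified by its size D (D \<ge> 2);
  there is exactly one system of each size. Pure states of a system of size D are
  indexed by 0..<D. Signs s \<in> {+,-} are encoded as bool, True = +.\<close>

definition sign_mult :: "bool \<Rightarrow> bool \<Rightarrow> bool" where
  "sign_mult \<tau> s = (\<tau> = s)"

text \<open>Size of the composite X^{\<boxtimes>k} of k copies of a system of size d
  (composite of sizes D_A, D_B has size 2 D_A D_B).\<close>
fun comp_pow :: "nat \<Rightarrow> nat \<Rightarrow> nat" where
  "comp_pow d 0 = 1"
| "comp_pow d (Suc 0) = d"
| "comp_pow d (Suc (Suc k)) = 2 * comp_pow d (Suc k) * d"

text \<open>A channel E \<rightarrow> F (sizes dE, dF) is given by the distributions
  C j m \<tau> = \<lambda>^{(j)}_{m\<tau>}, for j < dE, over (m,\<tau>) with m < dF.\<close>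
definition channel :: "nat \<Rightarrow> nat \<Rightarrow> (nat \<Rightarrow> nat \<Rightarrow> bool \<Rightarrow> real) \<Rightarrow> bool" where
  "channel dE dF C \<longleftrightarrow> 2 \<le> dE \<and> 2 \<le> dF \<and>
     (\<forall>j<dE. (\<forall>m \<tau>. 0 \<le> C j m \<tau>) \<and> (\<forall>m \<tau>. dF \<le> m \<longrightarrow> C j m \<tau> = 0)
        \<and> (\<Sum>m<dF. \<Sum>\<tau>\<in>UNIV. C j m \<tau>) = 1)"

text \<open>Vectors on the state space of a composite AE: coefficients w.r.t. the pure
  states |(ij)_s). The pure state |(ij)_s) itself:\<close>
definition pure_vec :: "nat \<Rightarrow> nat \<Rightarrow> bool \<Rightarrow> (nat \<Rightarrow> nat \<Rightarrow> bool \<Rightarrow> real)" where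
  "pure_vec i j s = (\<lambda>i' j' s'. if i' = i \<and> j' = j \<and> s' = s then 1 else 0)"

text \<open>Linear action of I_A \<boxtimes> C on vectors of AE, where
  (I_A \<boxtimes> C)|(ij)_s) = \<Sum>_{m,\<tau>} \<lambda>^{(j)}_{m\<tau>} |(im)_{\<tau>s}).\<close>
definition ext_act :: "nat \<Rightarrow> (nat \<Rightarrow> nat \<Rightarrow> bool \<Rightarrow> real)
    \<Rightarrow> (nat \<Rightarrow> nat \<Rightarrow> bool \<Rightarrow> real) \<Rightarrow> (nat \<Rightarrow> nat \<Rightarrow> bool \<Rightarrow> real)" where
  "ext_act dE C v = (\<lambda>i m \<sigma>. \<Sum>j<dE. \<Sum>s\<in>UNIV. v i j s *
      (\<Sum>\<tau>\<in>UNIV. if sign_mult \<tau> s = \<sigma> then C j m \<tau> else 0))"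

text \<open>D C = I_E: for every nontrivial A, (I_A \<boxtimes> D)(I_A \<boxtimes> C) acts as the identity
  on all pure states (hence on all states) of AE.\<close>
definition left_inverse :: "nat \<Rightarrow> nat \<Rightarrow> (nat \<Rightarrow> nat \<Rightarrow> bool \<Rightarrow> real)
    \<Rightarrow> (nat \<Rightarrow> nat \<Rightarrow> bool \<Rightarrow> real) \<Rightarrow> bool" where
  "left_inverse dE dF C D \<longleftrightarrow>
     (\<forall>dA\<ge>2. \<forall>i<dA. \<forall>j<dE. \<forall>s.
        ext_act dF D (ext_act dE C (pure_vec i j s)) = pure_vec i j s)"

definition embeds :: "nat \<Rightarrow> nat \<Rightarrow> bool" where
  "embeds dE dF \<longleftrightarrow> (\<exists>C D. channel dE dF C \<and> channel dF dE D \<and> left_inverse dE dF C D)"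

definition M2min :: "nat \<Rightarrow> nat \<Rightarrow> nat \<Rightarrow> nat" where
  "M2min a1 a2 k1 = (LEAST k2. 1 \<le> k2 \<and> embeds (comp_pow a1 k1) (comp_pow a2 k2))"

definition M1min :: "nat \<Rightarrow> nat \<Rightarrow> nat \<Rightarrow> nat" where
  "M1min a1 a2 h2 = (LEAST h1. 1 \<le> h1 \<and> embeds (comp_pow a2 h2) (comp_pow a1 h1))"

definition asym_equiv :: "nat \<Rightarrow> nat \<Rightarrow> bool" where
  "asym_equiv a1 a2 \<longleftrightarrow>
     (\<exists>k1\<ge>1. \<exists>k2\<ge>1. embeds (comp_pow a1 k1) (comp_pow a2 k2)) \<and>
     (\<exists>h1\<ge>1. \<exists>h2\<ge>1. embeds (comp_pow a2 h2) (comp_pow a1 h1)) \<and>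
     (\<forall>k1\<ge>1. \<exists>k2\<ge>1. embeds (comp_pow a1 k1) (comp_pow a2 k2)) \<and>
     (\<forall>h2\<ge>1. \<exists>h1\<ge>1. embeds (comp_pow a2 h2) (comp_pow a1 h1)) \<and>
     (\<exists>k::real. k > 0 \<and>
        ((\<lambda>k1. real (M2min a1 a2 k1) / real k1) \<longlongrightarrow> k) sequentially \<and>
        ((\<lambda>h2. real (M1min a1 a2 h2) / real h2) \<longlongrightarrow> inverse k) sequentially)"

definition obit :: "nat \<Rightarrow> bool" where
  "obit b \<longleftrightarrow> 2 \<le> b \<and> (\<forall>d\<ge>2. \<exists>k\<ge>1. embeds d (comp_pow b k))"

definition BCT_digitizable :: bool where
  "BCT_digitizable \<longleftrightarrow> (\<exists>b. obit b) \<and> (\<forall>b1 b2. obit b1 \<and> obit b2 \<longrightarrow> asym_equiv b1 b2)"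

end

theory Submission imports Defs begin

lemma cp_closed: "2 * comp_pow d (Suc k) = (2*d)^(Suc k)"
  by (induction k) (simp_all add: algebra_simps)

lemma cp_ge: "2 \<le> d \<Longrightarrow> 2^(Suc k) \<le> comp_pow d (Suc k)"
proof (induction k)
  case 0 then show ?case by simp
next
  case (Suc k)
  then have "2^(Suc k) \<le> comp_pow d (Suc k)" by simp
  then have "2 * 2^(Suc k) * 2 \<le> 2 * comp_pow d (Suc k) * d" using Suc.prems
    by (intro mult_mono) auto
  then show ?case by simp
qed

lemma ext_act_pure:
  assumes "j < dE"
  shows "ext_act dE C (pure_vec i j s) i' m \<sigma> =
    (if i' = i then (\<Sum>\<tau>\<in>UNIV. if sign_mult \<tau> s = \<sigma> then C j m \<tau> else 0) else 0)"
proof -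
  have "ext_act dE C (pure_vec i j s) i' m \<sigma> = (\<Sum>j'<dE. if j' = j then
     (if i' = i then (\<Sum>\<tau>\<in>UNIV. if sign_mult \<tau> s = \<sigma> then C j m \<tau> else 0) else 0) else 0)"
    unfolding ext_act_def pure_vec_def
    by (intro sum.cong refl) (auto simp: UNIV_bool)
  also have "\<dots> = (if i' = i then (\<Sum>\<tau>\<in>UNIV. if sign_mult \<tau> s = \<sigma> then C j m \<tau> else 0) else 0)"
    using assms by simp
  finally show ?thesis .
qed

definition detC :: "(nat \<Rightarrow> nat) \<Rightarrow> nat \<Rightarrow> nat \<Rightarrow> bool \<Rightarrow> real" where
  "detC f = (\<lambda>j m \<tau>. if m = f j \<and> \<tau> then 1 else 0)"

lemma detC_channel: "2 \<le> dE \<Longrightarrow> 2 \<le> dF \<Longrightarrow> (\<And>j. j < dE \<Longrightarrow> f j < dF) \<Longrightarrow> channel dE dF (detC f)"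
  unfolding channel_def detC_def by (auto simp: UNIV_bool) (meson leD)

lemma detC_act: "j < dE \<Longrightarrow> ext_act dE (detC f) (pure_vec i j s) = pure_vec i (f j) s"
  by (intro ext, subst ext_act_pure) (auto simp: detC_def pure_vec_def UNIV_bool sign_mult_def)

lemma embeds_le: "2 \<le> a \<Longrightarrow> a \<le> b \<Longrightarrow> embeds a b"
proof -
  assume a: "2 \<le> a" "a \<le> b"
  let ?C = "detC (\<lambda>j. j)" and ?D = "detC (\<lambda>m. if m < a then m else 0)"
  have "channel a b ?C" using a by (intro detC_channel) auto
  moreover have "channel b a ?D" using a by (intro detC_channel) auto
  moreover have "left_inverse a b ?C ?D"
    unfolding left_inverse_def using a by (auto simp: detC_act)
  ultimately show ?thesis unfolding embeds_def by blast
qed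

lemma embeds_ge:
  assumes "embeds a b" shows "a \<le> b"
proof -
  obtain C D where C: "channel a b C" and D: "channel b a D" and L: "left_inverse a b C D"
    using assms unfolding embeds_def by blast
  have key: "(\<Sum>m<b. \<Sum>\<sigma>\<in>UNIV. C j m \<sigma> * D m j \<sigma>) = 1" if j: "j < a" for j
  proof -
    have "ext_act b D (ext_act a C (pure_vec 0 j True)) 0 j True = pure_vec 0 j True 0 j True"
      using L j unfolding left_inverse_def by (metis order_refl pos2)
    then have "(\<Sum>m<b. \<Sum>\<sigma>\<in>UNIV. ext_act a C (pure_vec 0 j True) 0 m \<sigma> *
         (\<Sum>\<tau>\<in>UNIV. if sign_mult \<tau> \<sigma> = True then D m j \<tau> else 0)) = 1"
      unfolding ext_act_def[of b] by (simp add: pure_vec_def)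
    then show ?thesis
      using j by (simp add: ext_act_pure sign_mult_def UNIV_bool)
  qed
  have Cle: "C j m \<sigma> \<le> 1" if "j < a" "m < b" for j m \<sigma>
  proof -
    have "C j m \<sigma> \<le> (\<Sum>\<tau>\<in>UNIV. C j m \<tau>)"
      using C that unfolding channel_def by (intro member_le_sum) auto
    also have "\<dots> \<le> (\<Sum>m'<b. \<Sum>\<tau>\<in>UNIV. C j m' \<tau>)"
      using C that unfolding channel_def
      by (intro member_le_sum[where f="\<lambda>m'. \<Sum>\<tau>\<in>UNIV. C j m' \<tau>"]) (auto intro: sum_nonneg)
    finally show ?thesis using C that unfolding channel_def by auto
  qed
  have "real a = (\<Sum>j<a. \<Sum>m<b. \<Sum>\<sigma>\<in>UNIV. C j m \<sigma> * D m j \<sigma>)"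
    using key by simp
  also have "\<dots> \<le> (\<Sum>j<a. \<Sum>m<b. \<Sum>\<sigma>\<in>UNIV. D m j \<sigma>)"
  proof (intro sum_mono)
    fix j m \<sigma> assume "j \<in> {..<a}" "m \<in> {..<b}"
    then show "C j m \<sigma> * D m j \<sigma> \<le> D m j \<sigma>"
    proof -
      have "0 \<le> D m j \<sigma>" using D \<open>m \<in> {..<b}\<close> unfolding channel_def by auto
      moreover have "C j m \<sigma> \<le> 1" using Cle \<open>j \<in> {..<a}\<close> \<open>m \<in> {..<b}\<close> by auto
      moreover have "0 \<le> C j m \<sigma>" using C \<open>j \<in> {..<a}\<close> unfolding channel_def by auto
      ultimately show ?thesis by (simp add: mult_left_le_one_le)
    qed
  qed
  also have "\<dots> = (\<Sum>m<b. \<Sum>j<a. \<Sum>\<sigma>\<in>UNIV. D m j \<sigma>)" by (rule sum.swap)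
  also have "\<dots> = (\<Sum>m<b. 1)"
    by (rule sum.cong[OF refl]) (use D in \<open>simp add: channel_def\<close>)
  also have "\<dots> = real b" by simp
  finally show ?thesis by (simp only: of_nat_le_iff)
qed

lemma embeds_iff: "2 \<le> a \<Longrightarrow> 2 \<le> b \<Longrightarrow> embeds a b \<longleftrightarrow> a \<le> b"
  using embeds_le embeds_ge by blast

lemma cp_ge2: "2 \<le> d \<Longrightarrow> 1 \<le> n \<Longrightarrow> 2 \<le> comp_pow d n"
proof -
  assume "2 \<le> d" "1 \<le> n"
  then obtain k where k: "n = Suc k" by (cases n) auto
  have "(2::nat) \<le> 2^(Suc k)" by simp
  also have "\<dots> \<le> comp_pow d (Suc k)" using cp_ge \<open>2 \<le> d\<close> by blast
  finally show ?thesis using k by simp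
qed

lemma cp_ge_n: "2 \<le> d \<Longrightarrow> n \<le> comp_pow d n"
proof (cases n)
  case 0 then show ?thesis by simp
next
  case (Suc k)
  assume d: "2 \<le> d"
  have "n < 2^n" by (rule less_exp)
  also have "\<dots> \<le> comp_pow d n" using cp_ge[OF d, of k] Suc by simp
  finally show ?thesis by simp
qed

lemma embeds_cp_iff:
  assumes "2 \<le> x" "2 \<le> y" "1 \<le> n" "1 \<le> m"
  shows "embeds (comp_pow x n) (comp_pow y m) \<longleftrightarrow> (2*x)^n \<le> (2*y)^m"
proof -
  obtain n' where n: "n = Suc n'" using assms by (cases n) auto
  obtain m' where m: "m = Suc m'" using assms by (cases m) auto
  have "embeds (comp_pow x n) (comp_pow y m) \<longleftrightarrow> comp_pow x n \<le> comp_pow y m"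
    using assms by (intro embeds_iff cp_ge2) auto
  also have "\<dots> \<longleftrightarrow> 2 * comp_pow x n \<le> 2 * comp_pow y m" by simp
  also have "\<dots> \<longleftrightarrow> (2*x)^n \<le> (2*y)^m" unfolding n m cp_closed ..
  finally show ?thesis .
qed

lemma least_bounds:
  assumes x: "2 \<le> x" and y: "2 \<le> y" and n: "1 \<le> n"
  defines "M \<equiv> (LEAST m. 1 \<le> m \<and> embeds (comp_pow x n) (comp_pow y m))"
  shows "real n * ln (2 * real x) \<le> real M * ln (2 * real y)"
    and "(real M - 1) * ln (2 * real y) < real n * ln (2 * real x)"
proof -
  let ?P = "\<lambda>m. 1 \<le> m \<and> embeds (comp_pow x n) (comp_pow y m)"
  have Piff: "?P m \<longleftrightarrow> 1 \<le> m \<and> (2*x)^n \<le> (2*y)^m" for m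
  proof (cases "1 \<le> m")
    case True
    then show ?thesis using embeds_cp_iff[OF x y n True] by blast
  qed blast
  have ex: "?P ((2*x)^n)"
  proof -
    have "(2*x)^n < (2::nat)^((2*x)^n)" by (rule less_exp)
    also have "(2::nat)^((2*x)^n) \<le> (2*y)^((2*x)^n)" using y by (intro power_mono) auto
    finally have "(2*x)^n \<le> (2*y)^((2*x)^n)" by (rule less_imp_le)
    moreover have "1 \<le> (2*x)^n" using x by simp
    ultimately show ?thesis using Piff by blast
  qed
  have PM: "?P M" unfolding M_def by (rule LeastI[of ?P, OF ex])
  then have M1: "1 \<le> M" and up: "(2*x)^n \<le> (2*y)^M" using Piff by blast+
  have low: "(2*y)^(M-1) < (2*x)^n"
  proof (cases "M = 1")
    case True
    have "1 < (2*x)^n" using one_less_power[of "2*x" n] x n by simp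
    then show ?thesis using True by simp
  next
    case False
    then have "M - 1 < M" "1 \<le> M - 1" using M1 by auto
    from \<open>M - 1 < M\<close> have "\<not> ?P (M - 1)" unfolding M_def by (rule not_less_Least)
    then show ?thesis using Piff[of "M - 1"] \<open>1 \<le> M - 1\<close> not_le by blast
  qed
  have px: "0 < 2 * real x" and py: "0 < 2 * real y" using x y by auto
  have ex1: "real n * ln (2 * real x) = ln ((2 * real x)^n)" by (rule ln_realpow[symmetric])
  have ey1: "real M * ln (2 * real y) = ln ((2 * real y)^M)" by (rule ln_realpow[symmetric])
  have ey2: "real (M-1) * ln (2 * real y) = ln ((2 * real y)^(M-1))" by (rule ln_realpow[symmetric])
  have r1: "(2 * real x)^n \<le> (2 * real y)^M"
  proof -
    have "real ((2*x)^n) \<le> real ((2*y)^M)" using up by (simp only: of_nat_le_iff)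
    then show ?thesis by (simp only: of_nat_power of_nat_mult of_nat_numeral)
  qed
  have r2: "(2 * real y)^(M-1) < (2 * real x)^n"
  proof -
    have "real ((2*y)^(M-1)) < real ((2*x)^n)" using low by (simp only: of_nat_less_iff)
    then show ?thesis by (simp only: of_nat_power of_nat_mult of_nat_numeral)
  qed
  have "ln ((2 * real x)^n) \<le> ln ((2 * real y)^M)"
    using r1 px py by (subst ln_le_cancel_iff) auto
  then show "real n * ln (2 * real x) \<le> real M * ln (2 * real y)"
    unfolding ex1 ey1 .
  have "ln ((2 * real y)^(M-1)) < ln ((2 * real x)^n)"
    using r2 px py by (subst ln_less_cancel_iff) auto
  then have "real (M-1) * ln (2 * real y) < real n * ln (2 * real x)"
    unfolding ex1 ey2 .
  moreover have "real (M-1) = real M - 1" using M1 by (simp add: of_nat_diff)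
  ultimately show "(real M - 1) * ln (2 * real y) < real n * ln (2 * real x)" by simp
qed

lemma least_limit:
  assumes x: "2 \<le> x" and y: "2 \<le> y"
  shows "((\<lambda>n. real (LEAST m. 1 \<le> m \<and> embeds (comp_pow x n) (comp_pow y m)) / real n)
     \<longlongrightarrow> ln (2 * real x) / ln (2 * real y)) sequentially"
proof -
  define r where "r = ln (2 * real x) / ln (2 * real y)"
  let ?M = "\<lambda>n. (LEAST m. 1 \<le> m \<and> embeds (comp_pow x n) (comp_pow y m))"
  have ly: "0 < ln (2 * real y)" using y by simp
  have b: "r \<le> real (?M n) / real n \<and> real (?M n) / real n \<le> r + 1 / real n" if n: "1 \<le> n" for n
  proof -
    have n0: "0 < real n" using n by simp
    have h1: "real n * ln (2 * real x) \<le> real (?M n) * ln (2 * real y)"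
      by (rule least_bounds(1)[OF x y n])
    have h2: "(real (?M n) - 1) * ln (2 * real y) < real n * ln (2 * real x)"
      by (rule least_bounds(2)[OF x y n])
    have "r * real n \<le> real (?M n)"
      using h1 ly unfolding r_def by (simp add: field_simps)
    moreover have "real (?M n) - 1 \<le> r * real n"
      using h2 ly unfolding r_def by (simp add: field_simps)
    ultimately show ?thesis using n0 by (simp add: field_simps)
  qed
  have "((\<lambda>n. r + 1 / real n) \<longlongrightarrow> r + 0) sequentially"
    by (intro tendsto_add tendsto_const lim_1_over_n)
  then have hl: "((\<lambda>n. r + 1 / real n) \<longlongrightarrow> r) sequentially" by simp
  have e1: "eventually (\<lambda>n. r \<le> real (?M n) / real n) sequentially"
    using b unfolding eventually_sequentially by blast
  have e2: "eventually (\<lambda>n. real (?M n) / real n \<le> r + 1 / real n) sequentially"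
    using b unfolding eventually_sequentially by blast
  have "((\<lambda>n. real (?M n) / real n) \<longlongrightarrow> r) sequentially"
    by (rule tendsto_sandwich[OF e1 e2 tendsto_const hl])
  then show ?thesis unfolding r_def .
qed

theorem lemma2:
  shows "BCT_digitizable \<and> (\<forall>b\<ge>2. obit b)"
proof -
  have ob: "obit b" if b: "2 \<le> b" for b
    unfolding obit_def
  proof (intro conjI allI impI)
    fix d :: nat assume d: "2 \<le> d"
    have "embeds d (comp_pow b d)"
      using cp_ge_n[OF b, of d] d by (intro embeds_le) auto
    then show "\<exists>k\<ge>1. embeds d (comp_pow b k)" using d by (intro exI[of _ d]) auto
  qed (rule b)
  have fa: "\<forall>k1\<ge>1. \<exists>k2\<ge>1. embeds (comp_pow a1 k1) (comp_pow a2 k2)"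
    if "2 \<le> a1" "2 \<le> a2" for a1 a2
  proof (intro allI impI)
    fix k1 :: nat assume k1: "1 \<le> k1"
    let ?k = "comp_pow a1 k1"
    have "?k \<le> comp_pow a2 ?k" using cp_ge_n that by blast
    moreover have "1 \<le> ?k" using cp_ge2[OF that(1) k1] by simp
    ultimately show "\<exists>k2\<ge>1. embeds ?k (comp_pow a2 k2)"
      using cp_ge2[OF that(1) k1] by (intro exI[of _ ?k]) (auto intro: embeds_le)
  qed
  have ae: "asym_equiv b1 b2" if "2 \<le> b1" "2 \<le> b2" for b1 b2
  proof -
    define k where "k = ln (2 * real b1) / ln (2 * real b2)"
    have l1: "0 < ln (2 * real b1)" "0 < ln (2 * real b2)" using that by auto
    have "k > 0" unfolding k_def using l1 by simp
    moreover have "((\<lambda>k1. real (M2min b1 b2 k1) / real k1) \<longlongrightarrow> k) sequentially"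
      unfolding M2min_def k_def by (rule least_limit[OF that])
    moreover have "((\<lambda>h2. real (M1min b1 b2 h2) / real h2) \<longlongrightarrow> inverse k) sequentially"
    proof -
      have "inverse k = ln (2 * real b2) / ln (2 * real b1)" unfolding k_def by simp
      then show ?thesis unfolding M1min_def using least_limit[OF that(2) that(1)] by simp
    qed
    moreover have "\<forall>k1\<ge>1. \<exists>k2\<ge>1. embeds (comp_pow b1 k1) (comp_pow b2 k2)" using fa that by blast
    moreover have "\<forall>h2\<ge>1. \<exists>h1\<ge>1. embeds (comp_pow b2 h2) (comp_pow b1 h1)" using fa that by blast
    ultimately show ?thesis unfolding asym_equiv_def by (intro conjI) blast+
  qed
  show ?thesis
    unfolding BCT_digitizable_def
  proof (intro conjI allI impI)
    show "\<exists>b. obit b" using ob[of 2] by blast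
  next
    fix b1 b2 assume "obit b1 \<and> obit b2"
    then have "2 \<le> b1" "2 \<le> b2" unfolding obit_def by auto
    then show "asym_equiv b1 b2" by (rule ae)
  next
    fix b :: nat assume "2 \<le> b" then show "obit b" by (rule ob)
  qed
qed

end
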